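(* Let $m$ be an even integer $\ge4$ and $l\ge m/2$. For any $u_1,\ldots,u_m\in V$, $$(\pi\otimes1_V^{\otimes m-4}\otimes\pi)(1_V^{\otimes m}\otimes C^{\otimes l})|u_1u_2\cdots u_m\omega_0^l| = (\pi\otimes1_V^{\otimes m-4}\otimes\pi)\Big((2g)^lu_1\cdots u_m+\big(l-\tfrac m2\big)(-1)^l\Phi_1(u)+(-1)^l\Phi_2(u)\Big),$$ where $\Phi_1(u)=(-1)^{\frac m2-1}\mathrm{Cont}(u_2\cdots u_{m-1})\,u_m\omega_0^{\frac m2-1}u_1$ and $$\Phi_2(u)=\sum_{\substack{1\le k\le m-1\\ k\text{ odd}}}(-1)^{\frac{k-1}2}\Big(\mathrm{Cont}(u_{m-k+1}\cdots u_{m-1})\,u_m\omega_0^{\frac{k-1}2}u_1u_2\cdots u_{m-k}+\mathrm{Cont}(u_2\cdots u_k)\,u_{k+1}\cdots u_m\omega_0^{\frac{k-1}2}u_1\Big).$$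
   Context: $\mathbb{K}$ is a field of characteristic zero and $V$ a symplectic $\mathbb{K}$-vector space of dimension $2g$ with symplectic basis $a_1,\ldots,a_g,b_1,\ldots,b_g$; $\omega_0=\sum_i(a_i\otimes b_i-b_i\otimes a_i)\in V^{\otimes 2}$. $C\colon V^{\otimes2}\to\mathbb{K}$ is bilinear with $C(a_i\otimes b_j)=\delta_{ij}$, $C(b_i\otimes a_j)=-\delta_{ij}$, $C(a_i\otimes a_j)=C(b_i\otimes b_j)=0$ (so $C(\omega_0)=2g$); $Q=\ker C$ and $\pi\colon V^{\otimes2}\to Q$ is the projection along $V^{\otimes2}=Q\oplus\mathbb{K}\omega_0$. Products are taken in the tensor algebra $T(V)$. Here $|\cdot|$ is the cyclic symmetrization $|x_1\cdots x_N|=\sum_{k=0}^{N-1}\nu^k(x_1\cdots x_N)$ for $x_i\in V$, with $\nu(x_1x_2\cdots x_N)=x_2\cdots x_Nx_1$. $C^{\otimes l}$ is applied to the last $2l$ tensor factors in consecutive pairs. For $v_1,\ldots,v_{2r}\in V$, $\mathrm{Cont}(v_1\cdots v_{2r})=C(v_1\otimes v_2)\cdots C(v_{2r-1}\otimes v_{2r})$ (equal to $1$ for $r=0$). *)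

theory Defs
  imports Main
begin

(* Coordinate model of V: basis e_0,...,e_{2g-1} with e_i = a_{i+1} (i < g),
   e_{g+i} = b_{i+1} (i < g).  A vector is its coordinate function (only
   coordinates < 2g are used); a degree-N tensor is its coefficient function on
   words of length N over {..<2g}. *)

type_synonym 'k vec = "nat \<Rightarrow> 'k"
type_synonym 'k tensor = "nat list \<Rightarrow> 'k"

definition words :: "nat \<Rightarrow> nat \<Rightarrow> nat list set" where
  "words g N = {w. length w = N \<and> set w \<subseteq> {..<2*g}}"

(* omc g i j = C(e_i \<otimes> e_j) = coefficient of e_i e_j in omega_0 *)
definition omc :: "nat \<Rightarrow> nat \<Rightarrow> nat \<Rightarrow> 'k::ring_1" where
  "omc g i j = (if i < g \<and> j = i + g then 1 else if j < g \<and> i = j + g then -1 else 0)"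

definition Cbil :: "nat \<Rightarrow> 'k::ring_1 vec \<Rightarrow> 'k vec \<Rightarrow> 'k" where
  "Cbil g x y = (\<Sum>i<2*g. \<Sum>j<2*g. x i * y j * omc g i j)"

fun contl :: "nat \<Rightarrow> 'k::ring_1 vec list \<Rightarrow> 'k" where
  "contl g (x # y # r) = Cbil g x y * contl g r"
| "contl g _ = 1"

definition vt :: "'k vec \<Rightarrow> 'k tensor" where
  "vt u w = u (hd w)"

definition vw :: "'k::comm_monoid_mult vec list \<Rightarrow> 'k tensor" where
  "vw us w = (\<Prod>i<length us. (us ! i) (w ! i))"

definition ompow :: "nat \<Rightarrow> nat \<Rightarrow> 'k::comm_ring_1 tensor" where
  "ompow g k w = (\<Prod>i<k. omc g (w ! (2*i)) (w ! (2*i+1)))"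

definition tm :: "nat \<Rightarrow> 'k::times tensor \<Rightarrow> 'k tensor \<Rightarrow> 'k tensor" where
  "tm n S T w = S (take n w) * T (drop n w)"

(* nu(x_1 x_2 ... x_N) = x_2 ... x_N x_1, extended linearly *)
definition nu :: "'k tensor \<Rightarrow> 'k tensor" where
  "nu T v = T (last v # butlast v)"

definition cyc :: "nat \<Rightarrow> 'k::comm_monoid_add tensor \<Rightarrow> 'k tensor" where
  "cyc N T v = (\<Sum>k<N. (nu ^^ k) T v)"

(* 1^{\<otimes> deg v} \<otimes> C^{\<otimes> l} applied to a tensor of degree deg v + 2l *)
definition contrC :: "nat \<Rightarrow> nat \<Rightarrow> 'k::comm_ring_1 tensor \<Rightarrow> 'k tensor" where
  "contrC g l T v = (\<Sum>z\<in>words g (2*l). T (v @ z) * (\<Prod>i<l. omc g (z ! (2*i)) (z ! (2*i+1))))"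

(* pi(x) = x - C(x)/(2g) omega_0, applied to the first two / last two factors *)
definition piL :: "nat \<Rightarrow> 'k::field tensor \<Rightarrow> 'k tensor" where
  "piL g T v = T v - omc g (v ! 0) (v ! 1) / of_nat (2*g) *
      (\<Sum>x<2*g. \<Sum>y<2*g. omc g x y * T (x # y # drop 2 v))"

definition piR :: "nat \<Rightarrow> 'k::field tensor \<Rightarrow> 'k tensor" where
  "piR g T v = T v - omc g (v ! (length v - 2)) (v ! (length v - 1)) / of_nat (2*g) *
      (\<Sum>x<2*g. \<Sum>y<2*g. omc g x y * T (take (length v - 2) v @ [x, y]))"

definition Pi2 :: "nat \<Rightarrow> 'k::field tensor \<Rightarrow> 'k tensor" where
  "Pi2 g T = piL g (piR g T)"

definition Phi1 :: "nat \<Rightarrow> nat \<Rightarrow> (nat \<Rightarrow> 'k::comm_ring_1 vec) \<Rightarrow> 'k tensor" where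
  "Phi1 g m u v = (-1) ^ (m div 2 - 1) * contl g (map u [2..<m]) *
     tm 1 (vt (u m)) (tm (2 * (m div 2 - 1)) (ompow g (m div 2 - 1)) (vt (u 1))) v"

definition Phi2 :: "nat \<Rightarrow> nat \<Rightarrow> (nat \<Rightarrow> 'k::comm_ring_1 vec) \<Rightarrow> 'k tensor" where
  "Phi2 g m u v = (\<Sum>k\<in>{k. 1 \<le> k \<and> k \<le> m - 1 \<and> odd k}. (-1) ^ ((k - 1) div 2) *
     (contl g (map u [m-k+1..<m]) *
        tm 1 (vt (u m)) (tm (k - 1) (ompow g ((k - 1) div 2)) (vw (map u [1..<m-k+1]))) v
      + contl g (map u [2..<k+1]) *
        tm (m - k) (vw (map u [k+1..<m+1])) (tm (k - 1) (ompow g ((k - 1) div 2)) (vt (u 1))) v))"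

end

theory Submission
  imports Defs
begin

lemma finite_words[simp]: "finite (words g n)"
proof -
  have "words g n \<subseteq> {w. set w \<subseteq> {..<2*g} \<and> length w = n}" by (auto simp: words_def)
  moreover have "finite {w. set w \<subseteq> {..<2*g} \<and> length w = n}"
    by (rule finite_lists_length_eq) simp
  ultimately show ?thesis by (rule finite_subset)
qed

lemma words_0[simp]: "words g 0 = {[]}" by (auto simp: words_def)

lemma words_Suc: "words g (Suc n) = (\<lambda>(a,z). a#z) ` ({..<2*g} \<times> words g n)"
proof (rule set_eqI, rule iffI)
  fix w assume "w \<in> words g (Suc n)"
  then obtain a z where "w = a # z" "a < 2*g" "z \<in> words g n"
    by (cases w) (auto simp: words_def)
  then show "w \<in> (\<lambda>(a,z). a#z) ` ({..<2*g} \<times> words g n)" by force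
qed (auto simp: words_def)

lemma sum_words_Suc: "(\<Sum>z\<in>words g (Suc n). f z) = (\<Sum>a<2*g. \<Sum>z\<in>words g n. f (a#z))"
proof -
  have inj: "inj_on (\<lambda>(a,z). a#z) ({..<2*g} \<times> words g n)" by (auto simp: inj_on_def)
  show ?thesis unfolding words_Suc sum.reindex[OF inj]
    by (simp add: sum.cartesian_product split_def)
qed

lemma sum_words_add: "(\<Sum>z\<in>words g (a+b). f z) = (\<Sum>x\<in>words g a. \<Sum>y\<in>words g b. f (x@y))"
proof (induction a arbitrary: f)
  case 0 then show ?case by simp
next
  case (Suc a)
  have "(\<Sum>z\<in>words g (Suc a + b). f z) = (\<Sum>c<2*g. \<Sum>z\<in>words g (a+b). f (c#z))"
    using sum_words_Suc[where g=g and n="a+b" and f=f] by simp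
  also have "\<dots> = (\<Sum>c<2*g. \<Sum>x\<in>words g a. \<Sum>y\<in>words g b. f (c#x@y))"
    using Suc.IH by simp
  also have "\<dots> = (\<Sum>x\<in>words g (Suc a). \<Sum>y\<in>words g b. f (x@y))"
    by (simp add: sum_words_Suc)
  finally show ?case .
qed

lemma sum_words_split:
  "(\<Sum>z\<in>words g (a + (2 + b)). f z) =
   (\<Sum>p\<in>words g a. \<Sum>c<2*g. \<Sum>d<2*g. \<Sum>x\<in>words g b. f (p @ c # d # x))"
  apply (subst sum_words_add[where a=a and b="2+b"])
  apply (simp add: sum_words_Suc numeral_2_eq_2)
  done

lemma vw_Nil[simp]: "vw [] w = 1" by (simp add: vw_def)
lemma vw_Cons[simp]: "vw (x#xs) (a#w) = x a * vw xs w"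
  unfolding vw_def by (simp only: length_Cons prod.lessThan_Suc_shift) simp
lemma vw_append: "length a = length xs \<Longrightarrow> vw (xs@ys) (a@b) = vw xs a * vw ys b"
  by (induction xs arbitrary: a) (auto simp: length_Suc_conv mult.assoc)

lemma om_0[simp]: "ompow g 0 w = 1" by (simp add: ompow_def)
lemma om_Suc[simp]: "ompow g (Suc n) (a#b#w) = omc g a b * ompow g n w"
  unfolding ompow_def by (simp only: prod.lessThan_Suc_shift) simp
lemma om_app: "length X = 2*k \<Longrightarrow> k \<le> n \<Longrightarrow> ompow g n (X@Y) = ompow g k X * ompow g (n-k) Y"
proof (induction k arbitrary: X n)
  case 0 then show ?case by simp
next
  case (Suc k)
  then obtain a b X' where X: "X = a#b#X'" "length X' = 2*k"
    by (cases X; cases "tl X") auto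
  obtain n' where n: "n = Suc n'" using Suc.prems by (cases n) auto
  show ?case using Suc.IH[of X' n'] Suc.prems X n by (simp add: mult.assoc)
qed
lemma om_mid: "length X = 2*k \<Longrightarrow> k < n \<Longrightarrow>
   ompow g n (X @ x # y # Y) = ompow g k X * omc g x y * ompow g (n-k-1) Y"
  using om_app[of X k n g "x#y#Y"] by (cases "n-k") (auto simp: mult.assoc)

lemma vt_Cons[simp]: "vt u (a#w) = u a" by (simp add: vt_def)

lemma omc_neg: "omc g a b = - (omc g b a :: 'k::ring_1)"
  by (auto simp: omc_def)

lemma M2:
  assumes "d < 2*g" "b < 2*g"
  shows "(\<Sum>a<2*g. omc g d a * omc g a b) = (if d = b then -1 else (0::'k::ring_1))"
proof (cases "d < g")
  case True
  have "(\<Sum>a<2*g. omc g d a * omc g a b) = (\<Sum>a<2*g. if a = d+g then omc g a b else (0::'k))"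
    by (rule sum.cong) (use True in \<open>auto simp: omc_def\<close>)
  also have "\<dots> = omc g (d+g) b" using True by (simp add: sum.delta)
  finally show ?thesis using True assms by (cases "d = b") (auto simp: omc_def)
next
  case False
  have "(\<Sum>a<2*g. omc g d a * omc g a b) = (\<Sum>a<2*g. if a = d-g then - omc g a b else (0::'k))"
    by (rule sum.cong) (use False assms in \<open>auto simp: omc_def\<close>)
  also have "\<dots> = - omc g (d-g) b" proof - have "d - g < 2*g" using assms by linarith then show ?thesis by simp qed
  finally show ?thesis using False assms by (cases "d = b") (auto simp: omc_def)
qed

lemma omc_sq: "(\<Sum>a<2*g. \<Sum>b<2*g. omc g a b * omc g a b) = (of_nat (2*g) :: 'k::ring_1)"
proof -
  have "(\<Sum>a<2*g. \<Sum>b<2*g. omc g a b * omc g a b) = (\<Sum>a<2*g. - (\<Sum>b<2*g. omc g a b * omc g b (a::nat)) :: 'k)"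
  proof (rule sum.cong[OF refl])
    fix a assume "a \<in> {..<2*g}"
    have "\<And>b. omc g a b * omc g a b = - (omc g a b * omc g b a :: 'k)"
      by (subst (2) omc_neg) simp
    then show "(\<Sum>b<2*g. omc g a b * omc g a b) = - (\<Sum>b<2*g. omc g a b * omc g b (a::nat) :: 'k)"
      by (simp add: sum_negf[symmetric])
  qed
  also have "\<dots> = (\<Sum>a<2*g. 1)" by (simp add: M2)
  finally show ?thesis by simp
qed

lemma CH:
  assumes "d < 2*g" "e < 2*g"
  shows "(\<Sum>x\<in>words g (2*n). ompow g (Suc n) (d # x @ [e]) * ompow g n x) = (-1)^n * (omc g d e :: 'k::comm_ring_1)"
  using assms
proof (induction n arbitrary: d)
  case 0 then show ?case by simp
next
  case (Suc n)
  let ?S = "\<lambda>b. (\<Sum>x\<in>words g (2*n). ompow g (Suc n) (b # x @ [e]) * ompow g n x :: 'k)"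
  have "(\<Sum>x\<in>words g (2*Suc n). ompow g (Suc (Suc n)) (d # x @ [e]) * ompow g (Suc n) x)
      = (\<Sum>a<2*g. \<Sum>b<2*g. (omc g d a * omc g a b) * ?S b)"
    by (simp add: sum_words_Suc sum_distrib_left mult_ac)
  also have "\<dots> = (\<Sum>b<2*g. (\<Sum>a<2*g. omc g d a * omc g a b) * ?S b)"
    by (subst sum.swap) (simp add: sum_distrib_right)
  also have "\<dots> = (\<Sum>b<2*g. (if d = b then - ?S b else 0))"
    using Suc.prems by (intro sum.cong refl) (simp add: M2)
  also have "\<dots> = - ?S d" using Suc.prems by (simp add: sum.delta)
  also have "\<dots> = (-1)^Suc n * omc g d e" using Suc.IH[of d] Suc.prems by simp
  finally show ?case .
qed

lemma CHV1:
  assumes "e < 2*g"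
  shows "(\<Sum>c<2*g. \<Sum>d<2*g. \<Sum>x\<in>words g (2*n). u c * omc g c d * (ompow g (Suc n) (d # x @ [e]) * ompow g n x))
     = (-1)^Suc n * (u e :: 'k::comm_ring_1)"
proof -
  have "(\<Sum>c<2*g. \<Sum>d<2*g. \<Sum>x\<in>words g (2*n). u c * omc g c d * (ompow g (Suc n) (d # x @ [e]) * ompow g n x))
     = (\<Sum>c<2*g. \<Sum>d<2*g. u c * omc g c d * ((-1)^n * omc g d e))"
    using assms by (simp add: sum_distrib_left[symmetric] CH)
  also have "\<dots> = (\<Sum>c<2*g. u c * (-1)^n * (\<Sum>d<2*g. omc g c d * omc g d e))"
    by (simp add: sum_distrib_left mult_ac)
  also have "\<dots> = (\<Sum>c<2*g. if c = e then - (u c * (-1)^n) else 0)"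
    using assms by (intro sum.cong refl) (simp add: M2)
  also have "\<dots> = (-1)^Suc n * u e" using assms by (simp add: sum.delta)
  finally show ?thesis .
qed

lemma CHV2:
  assumes "e < 2*g"
  shows "(\<Sum>q\<in>words g (2*n). \<Sum>c<2*g. \<Sum>a<2*g. (ompow g (Suc n) (e # q @ [c]) * ompow g n q) * omc g c a * u a)
     = (-1)^Suc n * (u e :: 'k::comm_ring_1)"
proof -
  have "(\<Sum>q\<in>words g (2*n). \<Sum>c<2*g. \<Sum>a<2*g. (ompow g (Suc n) (e # q @ [c]) * ompow g n q) * omc g c a * u a)
     = (\<Sum>c<2*g. \<Sum>a<2*g. (\<Sum>q\<in>words g (2*n). ompow g (Suc n) (e # q @ [c]) * ompow g n q) * omc g c a * u a)"
    by (subst sum.swap) (simp add: sum.swap[where A="words g (2*n)"] sum_distrib_right)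
  also have "\<dots> = (\<Sum>c<2*g. \<Sum>a<2*g. ((-1)^n * omc g e c) * omc g c a * u a)"
    using assms by (intro sum.cong refl) (simp add: CH)
  also have "\<dots> = (\<Sum>a<2*g. (-1)^n * (\<Sum>c<2*g. omc g e c * omc g c a) * u a)"
    by (subst sum.swap) (simp add: sum_distrib_left sum_distrib_right mult_ac)
  also have "\<dots> = (\<Sum>a<2*g. if e = a then - ((-1)^n * u a) else 0)"
    using assms by (intro sum.cong refl) (simp add: M2)
  also have "\<dots> = (-1)^Suc n * u e" using assms by (simp add: sum.delta)
  finally show ?thesis .
qed

lemma Cont:
  "length us = 2*n \<Longrightarrow> (\<Sum>p\<in>words g (2*n). vw us p * ompow g n p) = (contl g us :: 'k::comm_ring_1)"
proof (induction n arbitrary: us)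
  case 0 then show ?case by simp
next
  case (Suc n)
  then obtain x y us' where us: "us = x # y # us'" "length us' = 2*n"
    by (cases us; cases "tl us") auto
  have "(\<Sum>p\<in>words g (2*Suc n). vw us p * ompow g (Suc n) p)
     = (\<Sum>a<2*g. \<Sum>b<2*g. (x a * y b * omc g a b) * (\<Sum>p\<in>words g (2*n). vw us' p * ompow g n p))"
    by (simp add: us sum_words_Suc sum_distrib_left mult_ac)
  also have "\<dots> = Cbil g x y * contl g us'"
    using Suc.IH[OF us(2)] by (simp add: Cbil_def sum_distrib_right)
  finally show ?case by (simp add: us)
qed

lemma piL_sum: "finite J \<Longrightarrow> piL g (\<lambda>v. \<Sum>j\<in>J. F j v) w = (\<Sum>j\<in>J. piL g (F j) w)"
  unfolding piL_def
  by (simp add: sum_subtractf sum_distrib_left sum.swap[where A=J])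

lemma piR_sum: "finite J \<Longrightarrow> piR g (\<lambda>v. \<Sum>j\<in>J. F j v) w = (\<Sum>j\<in>J. piR g (F j) w)"
  unfolding piR_def
  by (simp add: sum_subtractf sum_distrib_left sum.swap[where A=J])

lemma Pi2_sum: "finite J \<Longrightarrow> Pi2 g (\<lambda>v. \<Sum>j\<in>J. F j v) w = (\<Sum>j\<in>J. Pi2 g (F j) w)"
proof -
  assume J: "finite J"
  have "piR g (\<lambda>v. \<Sum>j\<in>J. F j v) = (\<lambda>w. \<Sum>j\<in>J. piR g (F j) w)"
    using piR_sum[OF J] by blast
  then show ?thesis unfolding Pi2_def using piL_sum[OF J] by simp
qed

lemma take_words: "v \<in> words g m \<Longrightarrow> x < 2*g \<Longrightarrow> y < 2*g \<Longrightarrow> 2 \<le> m \<Longrightarrow>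
   take (length v - 2) v @ [x, y] \<in> words g m"
  by (auto simp: words_def dest: in_set_takeD)

lemma drop_words: "v \<in> words g m \<Longrightarrow> x < 2*g \<Longrightarrow> y < 2*g \<Longrightarrow> 2 \<le> m \<Longrightarrow>
   x # y # drop 2 v \<in> words g m"
  by (auto simp: words_def dest: in_set_dropD)

lemma piR_cong: "(\<And>v. v \<in> words g m \<Longrightarrow> f v = f' v) \<Longrightarrow> w \<in> words g m \<Longrightarrow> 2 \<le> m \<Longrightarrow>
   piR g f w = piR g f' w"
proof -
  assume h: "\<And>v. v \<in> words g m \<Longrightarrow> f v = f' v" and w: "w \<in> words g m" and m: "2 \<le> m"
  have "\<And>x y. x < 2*g \<Longrightarrow> y < 2*g \<Longrightarrow> f (take (length w - 2) w @ [x, y]) = f' (take (length w - 2) w @ [x, y])"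
    using h take_words[OF w _ _ m] by blast
  then have "(\<Sum>x<2*g. \<Sum>y<2*g. omc g x y * f (take (length w - 2) w @ [x, y])) =
     (\<Sum>x<2*g. \<Sum>y<2*g. omc g x y * f' (take (length w - 2) w @ [x, y]))" by (intro sum.cong refl) simp
  then show ?thesis unfolding piR_def using h[OF w] by simp
qed

lemma Pi2_cong: "(\<And>v. v \<in> words g m \<Longrightarrow> f v = f' v) \<Longrightarrow> w \<in> words g m \<Longrightarrow> 2 \<le> m \<Longrightarrow>
   Pi2 g f w = Pi2 g f' w"
proof -
  assume h: "\<And>v. v \<in> words g m \<Longrightarrow> f v = f' v" and w: "w \<in> words g m" and m: "2 \<le> m"
  have h2: "\<And>v. v \<in> words g m \<Longrightarrow> piR g f v = piR g f' v" by (rule piR_cong) (use h m in auto)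
  have "\<And>x y. x < 2*g \<Longrightarrow> y < 2*g \<Longrightarrow> piR g f (x # y # drop 2 w) = piR g f' (x # y # drop 2 w)"
    using h2 drop_words[OF w _ _ m] by blast
  then have "(\<Sum>x<2*g. \<Sum>y<2*g. omc g x y * piR g f (x # y # drop 2 w)) =
     (\<Sum>x<2*g. \<Sum>y<2*g. omc g x y * piR g f' (x # y # drop 2 w))" by (intro sum.cong refl) simp
  then show ?thesis unfolding Pi2_def piL_def using h2[OF w] by simp
qed

lemma R_kill:
  assumes f: "\<And>r x y. length r = m - 2 \<Longrightarrow> f (r @ [x,y]) = F r * omc g x y"
    and m: "2 \<le> m" and g: "0 < g" and w: "length w = m"
  shows "Pi2 g f w = (0::'k::field_char_0)"
proof -
  have R0: "piR g f v = 0" if v: "length v = m" for v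
  proof -
    obtain r x y where vr: "v = r @ [x,y]" "length r = m - 2"
    proof -
      have "length (drop (m-2) v) = 2" using v m by simp
      then obtain x y where xy: "drop (m-2) v = [x,y]" by (metis (no_types) length_0_conv length_Suc_conv numeral_2_eq_2)
      have "v = take (m-2) v @ [x,y]" using xy by (metis append_take_drop_id)
      then show ?thesis using that v m by simp
    qed
    have "piR g f v = F r * omc g x y - omc g x y / of_nat (2*g) * (\<Sum>a<2*g. \<Sum>b<2*g. omc g a b * (F r * omc g a b))"
    proof -
      have e: "v!(length v - 2) = x" "v!(length v - 1) = y" "take (length v - 2) v = r"
        using vr by (simp_all add: nth_append)
      have fv: "f v = F r * omc g x y" using vr f by simp
      show ?thesis unfolding piR_def e fv using vr(2) by (simp add: f)
    qed
    also have "\<dots> = F r * omc g x y - omc g x y / of_nat (2*g) * (F r * (\<Sum>a<2*g. \<Sum>b<2*g. omc g a b * omc g a b))"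
      by (simp add: sum_distrib_left mult_ac)
    also have "\<dots> = 0" using g by (simp add: omc_sq)
    finally show ?thesis .
  qed
  show ?thesis unfolding Pi2_def piL_def using w m by (simp add: R0)
qed

lemma L_kill:
  assumes f: "\<And>r x y. length r = m - 2 \<Longrightarrow> f (x # y # r) = omc g x y * F r"
    and m: "4 \<le> m" and g: "0 < g" and w: "length w = m"
  shows "Pi2 g f w = (0::'k::field_char_0)"
proof -
  define F' where "F' r = F r - omc g (r!(m-4)) (r!(m-3)) / of_nat (2*g) *
      (\<Sum>a<2*g. \<Sum>b<2*g. omc g a b * F (take (m-4) r @ [a,b]))" for r
  have R: "piR g f (x#y#r) = omc g x y * F' r" if r: "length r = m - 2" for x y r
  proof -
    have e: "(x#y#r)!(length (x#y#r) - 2) = r!(m-4)" "(x#y#r)!(length (x#y#r) - 1) = r!(m-3)"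
       "take (length (x#y#r) - 2) (x#y#r) = x # y # take (m-4) r"
      using r m by (simp_all add: nth_Cons' take_Cons' numeral_eq_Suc)
    have f2: "f (x # y # take (m-4) r @ [a,b]) = omc g x y * F (take (m-4) r @ [a,b])" for a b
      using r m by (intro f) simp
    show ?thesis unfolding piR_def e using r
      by (simp add: f f2 F'_def sum_distrib_left right_diff_distrib mult_ac)
  qed
  obtain x y r where wr: "w = x # y # r" "length r = m - 2"
    using w m by (cases w; cases "tl w") auto
  have "Pi2 g f w = omc g x y * F' r - omc g x y / of_nat (2*g) * ((\<Sum>a<2*g. \<Sum>b<2*g. omc g a b * omc g a b) * F' r)"
    unfolding Pi2_def piL_def using wr by (simp add: R sum_distrib_left sum_distrib_right mult_ac)
  also have "\<dots> = 0" using g by (simp add: omc_sq)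
  finally show ?thesis .
qed

definition Rr :: "nat list \<Rightarrow> nat list" where "Rr y = last y # butlast y"

lemma nu_pow: "(nu ^^ k) T y = T ((Rr ^^ k) y)"
proof (induction k arbitrary: y)
  case 0 then show ?case by simp
next
  case (Suc k)
  have "(nu ^^ Suc k) T y = nu ((nu ^^ k) T) y" by simp
  also have "\<dots> = (nu ^^ k) T (Rr y)" by (simp add: nu_def Rr_def)
  also have "\<dots> = T ((Rr ^^ k) (Rr y))" by (rule Suc.IH)
  also have "\<dots> = T ((Rr ^^ Suc k) y)" by (simp only: funpow_Suc_right comp_def)
  finally show ?case .
qed
lemma Rr_len: "y \<noteq> [] \<Longrightarrow> length ((Rr ^^ k) y) = length y \<and> (Rr ^^ k) y \<noteq> []"
  by (induction k) (auto simp: Rr_def)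

lemma Rr_rot: "y \<noteq> [] \<Longrightarrow> rotate k ((Rr ^^ k) y) = y"
proof (induction k)
  case 0 then show ?case by simp
next
  case (Suc k)
  have ne: "(Rr ^^ k) y \<noteq> []" using Rr_len[OF Suc.prems] by blast
  have "rotate1 (Rr ((Rr ^^ k) y)) = (Rr ^^ k) y"
    using ne by (simp add: Rr_def)
  have "rotate (Suc k) ((Rr ^^ Suc k) y) = rotate1 (rotate k (Rr ((Rr ^^ k) y)))"
    by (simp only: funpow.simps comp_def rotate_Suc)
  also have "\<dots> = rotate k (rotate1 (Rr ((Rr ^^ k) y)))"
    by (rule rotate1_rotate_swap)
  also have "\<dots> = rotate k ((Rr ^^ k) y)" using \<open>rotate1 (Rr ((Rr ^^ k) y)) = (Rr ^^ k) y\<close> by (rule arg_cong)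
  also have "\<dots> = y" using Suc by blast
  finally show ?case .
qed

lemma Rr_pow: "y \<noteq> [] \<Longrightarrow> k \<le> length y \<Longrightarrow> (Rr ^^ k) y = rotate (length y - k) y"
proof -
  assume y: "y \<noteq> []" and k: "k \<le> length y"
  have "rotate (length y - k) y = rotate (length y - k) (rotate k ((Rr ^^ k) y))" using Rr_rot[OF y, of k] by (rule arg_cong[symmetric])
  also have "\<dots> = rotate (length y) ((Rr ^^ k) y)" using k by (simp only: rotate_rotate le_add_diff_inverse2)
  also have "\<dots> = (Rr ^^ k) y" using Rr_len[OF y, of k] by (intro rotate_id) simp
  finally show ?thesis by (rule sym)
qed

lemma cyc_rot: fixes T :: "'k::comm_ring_1 tensor" shows "length y = N \<Longrightarrow> 0 < N \<Longrightarrow> cyc N T y = (\<Sum>j<N. T (rotate j y))"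
proof -
  assume l: "length y = N" and N: "0 < N"
  then have y: "y \<noteq> []" by auto
  define f where "f j = T (rotate j y)" for j
  have "cyc N T y = (\<Sum>k<N. f (N - k))"
    unfolding cyc_def f_def using l y by (intro sum.cong refl) (simp add: nu_pow Rr_pow)
  also have "\<dots> = (\<Sum>k<N. f (Suc (N - Suc k)))"
    by (intro sum.cong refl) (simp add: Suc_diff_Suc)
  also have "\<dots> = (\<Sum>i<N. f (Suc i))" by (rule sum.nat_diff_reindex)
  also have "\<dots> = (\<Sum>i<N. f i)"
  proof -
    have "f N = f 0" unfolding f_def using l by simp
    have "(\<Sum>i<Suc N. f i) = f 0 + (\<Sum>i<N. f (Suc i))" by (rule sum.lessThan_Suc_shift)
    moreover have "(\<Sum>i<Suc N. f i) = (\<Sum>i<N. f i) + f 0" using \<open>f N = f 0\<close> by simp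
    ultimately show ?thesis by (simp add: add.commute)
  qed
  finally show ?thesis unfolding f_def .
qed

definition Aj :: "nat \<Rightarrow> nat \<Rightarrow> nat \<Rightarrow> (nat \<Rightarrow> 'k::comm_ring_1 vec) \<Rightarrow> nat \<Rightarrow> 'k tensor" where
 "Aj g m l u j v = (\<Sum>z\<in>words g (2*l). tm m (vw (map u [1..<m+1])) (ompow g l) (rotate j (v@z)) * ompow g l z)"

lemma fac4: "(\<Sum>p\<in>P. \<Sum>c\<in>C. \<Sum>d\<in>D. \<Sum>x\<in>X. K * F p * G c d x) =
   (K::'k::comm_ring_1) * (\<Sum>p\<in>P. F p) * (\<Sum>c\<in>C. \<Sum>d\<in>D. \<Sum>x\<in>X. G c d x)"
proof -
  have "\<And>p. (\<Sum>c\<in>C. \<Sum>d\<in>D. \<Sum>x\<in>X. K * F p * G c d x) = K * F p * (\<Sum>c\<in>C. \<Sum>d\<in>D. \<Sum>x\<in>X. G c d x)"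
    by (simp add: sum_distrib_left)
  then have "(\<Sum>p\<in>P. \<Sum>c\<in>C. \<Sum>d\<in>D. \<Sum>x\<in>X. K * F p * G c d x) =
     (\<Sum>p\<in>P. F p * (K * (\<Sum>c\<in>C. \<Sum>d\<in>D. \<Sum>x\<in>X. G c d x)))"
    by (simp add: mult_ac)
  also have "\<dots> = (\<Sum>p\<in>P. F p) * (K * (\<Sum>c\<in>C. \<Sum>d\<in>D. \<Sum>x\<in>X. G c d x))"
    by (rule sum_distrib_right[symmetric])
  finally show ?thesis by (simp add: mult_ac)
qed

lemma upt_split3: "a \<le> b \<Longrightarrow> b \<le> c \<Longrightarrow> [a..<b] @ [b..<c] = [a..<c]"
  by (metis le_add_diff_inverse upt_add_eq_append)

lemma OmSq: "(\<Sum>z\<in>words g (2*l). ompow g l z * ompow g l z) = (of_nat (2*g) ^ l :: 'k::comm_ring_1)"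
proof (induction l)
  case 0 then show ?case by simp
next
  case (Suc l)
  have "(\<Sum>z\<in>words g (2*Suc l). ompow g (Suc l) z * ompow g (Suc l) z) =
     (\<Sum>a<2*g. \<Sum>b<2*g. (omc g a b * omc g a b) * (\<Sum>z\<in>words g (2*l). ompow g l z * ompow g l z) :: 'k)"
    by (simp add: sum_words_Suc sum_distrib_left mult_ac)
  also have "\<dots> = of_nat (2*g) ^ Suc l" using Suc.IH omc_sq[where 'k='k, of g]
    by (simp add: sum_distrib_right[symmetric])
  finally show ?case .
qed

lemma case0: "length v = m \<Longrightarrow> Aj g m l u 0 v = of_nat (2*g) ^ l * vw (map u [1..<m+1]) v"
proof -
  assume v: "length v = m"
  have "Aj g m l u 0 v = (\<Sum>z\<in>words g (2*l). vw (map u [1..<m+1]) v * (ompow g l z * ompow g l z))"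
    unfolding Aj_def tm_def using v by (simp add: mult.assoc)
  also have "\<dots> = vw (map u [1..<m+1]) v * of_nat (2*g) ^ l"
    by (simp only: sum_distrib_left[symmetric] OmSq)
  finally show ?thesis by (simp add: mult.commute)
qed

lemma case3:
  fixes u :: "nat \<Rightarrow> 'k::comm_ring_1 vec"
  assumes m: "m = 2*i + 1 + q" and l: "l = i + 1 + n" and v: "v = v0 # v1 @ v2"
    and v1: "length v1 = 2*i" and v2: "length v2 = q" and v0: "v0 < 2*g"
  shows "Aj g m l u (2*i+1) v = (-1)^(Suc n) * contl g (map u [q+1..<m]) * u m v0 * ompow g i v1 * vw (map u [1..<q+1]) v2"
proof -
  have us: "map u [1..<m+1] = map u [1..<q+1] @ map u [q+1..<m] @ [u m]"
  proof -
    have "[1..<m+1] = [1..<q+1] @ [q+1..<m+1]" by (rule upt_split3[symmetric]) (use m in auto)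
    moreover have "[q+1..<m+1] = [q+1..<m] @ [m]" using m by simp
    ultimately show ?thesis by simp
  qed
  have lz: "2*l = 2*i + (2 + 2*n)" using l by simp
  have trm: "tm m (vw (map u [1..<m+1])) (ompow g l) (rotate (2*i+1) (v @ p @ c # d # x)) * ompow g l (p @ c # d # x)
     = (vw (map u [1..<q+1]) v2 * ompow g i v1) * (vw (map u [q+1..<m]) p * (ompow g i p))
       * (u m c * omc g c d * (ompow g (Suc n) (d # x @ [v0]) * ompow g n x))"
    if p: "length p = 2*i" and x: "length x = 2*n" for p c d x
  proof -
    have rot: "rotate (2*i+1) (v @ p @ c # d # x) = v2 @ p @ c # d # x @ v0 # v1"
      using v v1 v2 p x m l by (simp add: rotate_drop_take)
    have tk: "take m (v2 @ p @ c # d # x @ v0 # v1) = v2 @ p @ [c]"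
      using v2 p m by simp
    have dr: "drop m (v2 @ p @ c # d # x @ v0 # v1) = (d # x @ [v0]) @ v1"
      using v2 p m by simp
    have o1: "ompow g l ((d # x @ [v0]) @ v1) = ompow g (Suc n) (d # x @ [v0]) * ompow g i v1"
      using x l by (subst om_app[where k="Suc n"]) simp_all
    have o2: "ompow g l (p @ c # d # x) = ompow g i p * omc g c d * ompow g n x"
      using p l by (subst om_mid[where k=i]) simp_all
    have w1: "vw (map u [1..<m+1]) (v2 @ p @ [c]) = vw (map u [1..<q+1]) v2 * vw (map u [q+1..<m]) p * u m c"
      unfolding us using v2 p m by (simp add: vw_append mult.assoc)
    show ?thesis unfolding rot tm_def tk dr o1 o2 w1 by (simp add: mult_ac)
  qed
  have "Aj g m l u (2*i+1) v = (\<Sum>p\<in>words g (2*i). \<Sum>c<2*g. \<Sum>d<2*g. \<Sum>x\<in>words g (2*n).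
     (vw (map u [1..<q+1]) v2 * ompow g i v1) * (vw (map u [q+1..<m]) p * (ompow g i p))
       * (u m c * omc g c d * (ompow g (Suc n) (d # x @ [v0]) * ompow g n x)))"
    unfolding Aj_def lz sum_words_split
    by (intro sum.cong refl trm) (auto simp: words_def)
  also have "\<dots> = (vw (map u [1..<q+1]) v2 * ompow g i v1) * contl g (map u [q+1..<m]) * ((-1)^Suc n * u m v0)"
    unfolding fac4 using m v0 by (simp add: Cont CHV1)
  finally show ?thesis by (simp add: mult_ac)
qed

lemma case5a:
  fixes u :: "nat \<Rightarrow> 'k::comm_ring_1 vec"
  assumes m: "m = 2*h + 2" and l: "l = s + h + n + 2" and v: "v = v0 # v1 @ [v2]"
    and v1: "length v1 = 2*h" and v0: "v0 < 2*g" and v2: "v2 < 2*g"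
  shows "Aj g m l u (m + 2*s + 1) v = (-1)^(Suc n) * (-1)^(Suc s) * contl g (map u [2..<m]) * u m v0 * ompow g h v1 * u 1 v2"
proof -
  have us: "map u [1..<m+1] = u 1 # map u [2..<m] @ [u m]"
  proof -
    have "[1..<m+1] = 1 # [2..<m+1]" using upt_conv_Cons[of 1 "m+1"] m by (simp add: numeral_2_eq_2)
    moreover have "[2..<m+1] = [2..<m] @ [m]" using m by simp
    ultimately show ?thesis by simp
  qed
  have lz: "2*l = 2*s + (2 + (2*h + (2 + 2*n)))" using l by simp
  have trm: "tm m (vw (map u [1..<m+1])) (ompow g l) (rotate (m + 2*s + 1) (v @ q @ c # e # p @ b # d # x)) * ompow g l (q @ c # e # p @ b # d # x)
     = (ompow g h v1 * ((ompow g (Suc s) (v2 # q @ [c]) * ompow g s q) * omc g c e * u 1 e)) * (vw (map u [2..<m]) p * ompow g h p)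
       * (u m b * omc g b d * (ompow g (Suc n) (d # x @ [v0]) * ompow g n x))"
    if q: "length q = 2*s" and p: "length p = 2*h" and x: "length x = 2*n" for q c e p b d x
  proof -
    have rot: "rotate (m + 2*s + 1) (v @ q @ c # e # p @ b # d # x) = e # p @ b # d # x @ v0 # v1 @ v2 # q @ [c]"
      using v v1 q p x m l by (simp add: rotate_drop_take)
    have tk: "take m (e # p @ b # d # x @ v0 # v1 @ v2 # q @ [c]) = e # p @ [b]"
      using p m by simp
    have dr: "drop m (e # p @ b # d # x @ v0 # v1 @ v2 # q @ [c]) = (d # x @ [v0]) @ v1 @ (v2 # q @ [c])"
      using p m by simp
    have o1: "ompow g l ((d # x @ [v0]) @ v1 @ (v2 # q @ [c])) = ompow g (Suc n) (d # x @ [v0]) * (ompow g h v1 * ompow g (Suc s) (v2 # q @ [c]))"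
    proof -
      have a: "ompow g l ((d # x @ [v0]) @ v1 @ (v2 # q @ [c])) = ompow g (Suc n) (d # x @ [v0]) * ompow g (l - Suc n) (v1 @ (v2 # q @ [c]))"
        by (rule om_app) (use x l in simp_all)
      have b: "ompow g (l - Suc n) (v1 @ (v2 # q @ [c])) = ompow g h v1 * ompow g (l - Suc n - h) (v2 # q @ [c])"
        by (rule om_app) (use v1 l in simp_all)
      have c: "l - Suc n - h = Suc s" using l by simp
      show ?thesis unfolding a b c ..
    qed
    have o2: "ompow g l (q @ c # e # p @ b # d # x) = ompow g s q * omc g c e * (ompow g h p * omc g b d * ompow g n x)"
    proof -
      have a: "ompow g l (q @ c # e # (p @ b # d # x)) = ompow g s q * omc g c e * ompow g (l - s - 1) (p @ b # d # x)"
        by (rule om_mid) (use q l in simp_all)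
      have b: "ompow g (l - s - 1) (p @ b # d # x) = ompow g h p * omc g b d * ompow g (l - s - 1 - h - 1) x"
        by (rule om_mid) (use p l in simp_all)
      have c: "l - s - 1 - h - 1 = n" using l by simp
      show ?thesis unfolding a b c ..
    qed
    have w1: "vw (map u [1..<m+1]) (e # p @ [b]) = u 1 e * vw (map u [2..<m]) p * u m b"
    proof -
      have lp: "length p = length (map u [2..<m])" using p m by (simp only: length_map length_upt, (arith)?)
      show ?thesis unfolding us vw_Cons vw_append[OF lp] by (simp only: vw_Cons vw_Nil mult_1_right mult.assoc)
    qed
    show ?thesis unfolding rot tm_def tk dr o1 o2 w1 by (simp add: mult_ac)
  qed
  have "Aj g m l u (m + 2*s + 1) v = (\<Sum>q\<in>words g (2*s). \<Sum>c<2*g. \<Sum>e<2*g.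
     \<Sum>p\<in>words g (2*h). \<Sum>b<2*g. \<Sum>d<2*g. \<Sum>x\<in>words g (2*n).
     (ompow g h v1 * ((ompow g (Suc s) (v2 # q @ [c]) * ompow g s q) * omc g c e * u 1 e)) * (vw (map u [2..<m]) p * ompow g h p)
       * (u m b * omc g b d * (ompow g (Suc n) (d # x @ [v0]) * ompow g n x)))"
    unfolding Aj_def lz sum_words_split
    by (intro sum.cong refl trm) (auto simp: words_def)
  also have "\<dots> = (\<Sum>q\<in>words g (2*s). \<Sum>c<2*g. \<Sum>e<2*g.
     (ompow g h v1 * ((ompow g (Suc s) (v2 # q @ [c]) * ompow g s q) * omc g c e * u 1 e)) * contl g (map u [2..<m])
       * ((-1)^Suc n * u m v0))"
  proof -
    have cp: "(\<Sum>p\<in>words g (2*h). vw (map u [2..<m]) p * ompow g h p) = contl g (map u [2..<m])"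
      by (rule Cont) (simp only: length_map length_upt, use m in arith)
    show ?thesis unfolding fac4 cp CHV1[OF v0] ..
  qed
  also have "\<dots> = ompow g h v1 * contl g (map u [2..<m]) * ((-1)^Suc n * u m v0) *
     (\<Sum>q\<in>words g (2*s). \<Sum>c<2*g. \<Sum>e<2*g. (ompow g (Suc s) (v2 # q @ [c]) * ompow g s q) * omc g c e * u 1 e)"
    by (simp add: sum_distrib_left mult_ac)
  also have "\<dots> = ompow g h v1 * contl g (map u [2..<m]) * ((-1)^Suc n * u m v0) * ((-1)^Suc s * u 1 v2)"
    using v2 by (simp only: CHV2)
  finally show ?thesis by (simp add: mult_ac)
qed

lemma case5b:
  fixes u :: "nat \<Rightarrow> 'k::comm_ring_1 vec"
  assumes m: "m = q' + 2*i + 1" and l: "l = s + i + 1" and v: "v = v1 @ v2 @ [v3]"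
    and v1: "length v1 = q'" and v2: "length v2 = 2*i" and v3: "v3 < 2*g"
  shows "Aj g m l u (m + 2*s + 1) v = (-1)^(Suc s) * contl g (map u [2..<2*i+2]) * vw (map u [2*i+2..<m+1]) v1 * ompow g i v2 * u 1 v3"
proof -
  have us: "map u [1..<m+1] = u 1 # map u [2..<2*i+2] @ map u [2*i+2..<m+1]"
  proof -
    have "[1..<m+1] = 1 # [2..<m+1]" using upt_conv_Cons[of 1 "m+1"] m by (simp add: numeral_2_eq_2)
    moreover have "[2..<m+1] = [2..<2*i+2] @ [2*i+2..<m+1]" by (rule upt_split3[symmetric]) (use m in auto)
    ultimately show ?thesis by simp
  qed
  have lz: "2*l = 2*s + (2 + 2*i)" using l by simp
  have trm: "tm m (vw (map u [1..<m+1])) (ompow g l) (rotate (m + 2*s + 1) (v @ q @ c # e # p)) * ompow g l (q @ c # e # p)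
     = (vw (map u [2*i+2..<m+1]) v1 * ompow g i v2) * ((ompow g (Suc s) (v3 # q @ [c]) * ompow g s q) * omc g c e * u 1 e)
       * (vw (map u [2..<2*i+2]) p * ompow g i p)"
    if q: "length q = 2*s" and p: "length p = 2*i" for q c e p
  proof -
    have rot: "rotate (m + 2*s + 1) (v @ q @ c # e # p) = e # p @ v1 @ v2 @ v3 # q @ [c]"
      using v v1 v2 q p m l by (simp add: rotate_drop_take)
    have tk: "take m (e # p @ v1 @ v2 @ v3 # q @ [c]) = e # p @ v1"
      using p v1 m by simp
    have dr: "drop m (e # p @ v1 @ v2 @ v3 # q @ [c]) = v2 @ (v3 # q @ [c])"
      using p v1 m by simp
    have o1: "ompow g l (v2 @ (v3 # q @ [c])) = ompow g i v2 * ompow g (Suc s) (v3 # q @ [c])"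
      using q l v2 by (subst om_app[where k=i]) simp_all
    have o2: "ompow g l (q @ c # e # p) = ompow g s q * omc g c e * ompow g i p"
      using q p l by (subst om_mid[where k=s]) simp_all
    have w1: "vw (map u [1..<m+1]) (e # p @ v1) = u 1 e * vw (map u [2..<2*i+2]) p * vw (map u [2*i+2..<m+1]) v1"
    proof -
      have lp: "length p = length (map u [2..<2*i+2])" using p by (simp only: length_map length_upt, (arith)?)
      show ?thesis unfolding us vw_Cons vw_append[OF lp] by (simp only: mult.assoc)
    qed
    show ?thesis unfolding rot tm_def tk dr o1 o2 w1 by (simp add: mult_ac)
  qed
  have "Aj g m l u (m + 2*s + 1) v = (\<Sum>q\<in>words g (2*s). \<Sum>c<2*g. \<Sum>e<2*g. \<Sum>p\<in>words g (2*i).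
      (vw (map u [2*i+2..<m+1]) v1 * ompow g i v2) * ((ompow g (Suc s) (v3 # q @ [c]) * ompow g s q) * omc g c e * u 1 e)
       * (vw (map u [2..<2*i+2]) p * ompow g i p))"
    unfolding Aj_def lz sum_words_split
    by (intro sum.cong refl trm) (auto simp: words_def)
  also have "\<dots> = (vw (map u [2*i+2..<m+1]) v1 * ompow g i v2) *
     (\<Sum>q\<in>words g (2*s). \<Sum>c<2*g. \<Sum>e<2*g. (ompow g (Suc s) (v3 # q @ [c]) * ompow g s q) * omc g c e * u 1 e)
     * (\<Sum>p\<in>words g (2*i). vw (map u [2..<2*i+2]) p * ompow g i p)"
    by (simp add: sum_distrib_left sum_distrib_right mult_ac)
  also have "\<dots> = (vw (map u [2*i+2..<m+1]) v1 * ompow g i v2) * ((-1)^Suc s * u 1 v3) * contl g (map u [2..<2*i+2])"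
  proof -
    have cp: "(\<Sum>p\<in>words g (2*i). vw (map u [2..<2*i+2]) p * ompow g i p) = contl g (map u [2..<2*i+2])"
      by (rule Cont) (simp only: length_map length_upt, (arith)?)
    show ?thesis unfolding cp CHV2[OF v3] ..
  qed
  finally show ?thesis by (simp add: mult_ac)
qed

lemma killL1:
  fixes u :: "nat \<Rightarrow> 'k::comm_ring_1 vec"
  assumes m: "2*i + 4 \<le> m" and ml: "m \<le> 2*l" and r: "length r = m - 2"
  shows "Aj g m l u (2*i+2) (x#y#r) = omc g x y * (\<Sum>z1\<in>words g (2*i+2). \<Sum>z2\<in>words g (2*l-(2*i+2)).
     vw (map u [1..<m+1]) (drop (2*i) r @ z1) * ompow g (l-i-1) z2 * ompow g i (take (2*i) r) * ompow g l (z1@z2))"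
proof -
  define r1 where "r1 = take (2*i) r"
  define r2 where "r2 = drop (2*i) r"
  have rr: "r = r1 @ r2" by (simp add: r1_def r2_def)
  have l1: "length r1 = 2*i" and l2: "length r2 = m - 2 - 2*i" using r m by (simp_all add: r1_def r2_def)
  have lz: "2*l = (2*i+2) + (2*l-(2*i+2))" using m ml by simp
  have trm: "tm m (vw (map u [1..<m+1])) (ompow g l) (rotate (2*i+2) ((x#y#r) @ z1 @ z2)) * ompow g l (z1 @ z2)
     = omc g x y * (vw (map u [1..<m+1]) (r2 @ z1) * ompow g (l-i-1) z2 * ompow g i r1 * ompow g l (z1@z2))"
    if z1: "length z1 = 2*i+2" and z2: "length z2 = 2*l-(2*i+2)" for z1 z2
  proof -
    have rot: "rotate (2*i+2) ((x#y#r) @ z1 @ z2) = r2 @ z1 @ z2 @ x # y # r1"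
      unfolding rr using l1 l2 z1 z2 m ml by (simp add: rotate_drop_take)
    have tk: "take m (r2 @ z1 @ z2 @ x # y # r1) = r2 @ z1" using l2 z1 m by simp
    have dr: "drop m (r2 @ z1 @ z2 @ x # y # r1) = z2 @ x # y # r1" using l2 z1 m by simp
    have o: "ompow g l (z2 @ x # y # r1) = ompow g (l-i-1) z2 * omc g x y * ompow g i r1"
    proof -
      have "ompow g l (z2 @ x # y # r1) = ompow g (l-i-1) z2 * omc g x y * ompow g (l - (l-i-1) - 1) r1"
        by (rule om_mid) (use z2 m ml in simp_all)
      moreover have "l - (l-i-1) - 1 = i" using m ml by simp
      ultimately show ?thesis by simp
    qed
    show ?thesis unfolding rot tm_def tk dr o by (simp add: mult_ac)
  qed
  show ?thesis unfolding Aj_def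
    apply (subst lz)
    apply (subst sum_words_add)
    apply (simp only: sum_distrib_left)
    apply (intro sum.cong refl)
    apply (rule trm[unfolded r1_def r2_def])
     apply (auto simp: words_def)
    done
qed

lemma killL2:
  fixes u :: "nat \<Rightarrow> 'k::comm_ring_1 vec"
  assumes m: "m = 2*h" "1 \<le> h" and l: "l = s + h + k" and r: "length r = m - 2"
  shows "Aj g m l u (m + 2*s) (x#y#r) = omc g x y * (\<Sum>z1\<in>words g (2*s). \<Sum>z2\<in>words g m. \<Sum>z3\<in>words g (2*k).
     vw (map u [1..<m+1]) z2 * ompow g k z3 * ompow g (l-k-1) (r @ z1) * ompow g l (z1@z2@z3))"
proof -
  have lz: "2*l = 2*s + (m + 2*k)" using m l by simp
  have trm: "tm m (vw (map u [1..<m+1])) (ompow g l) (rotate (m + 2*s) ((x#y#r) @ z1 @ z2 @ z3)) * ompow g l (z1 @ z2 @ z3)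
     = omc g x y * (vw (map u [1..<m+1]) z2 * ompow g k z3 * ompow g (l-k-1) (r @ z1) * ompow g l (z1@z2@z3))"
    if z1: "length z1 = 2*s" and z2: "length z2 = m" and z3: "length z3 = 2*k" for z1 z2 z3
  proof -
    have rotw: "rotate (m + 2*s) (w @ z1 @ z2 @ z3) = z2 @ z3 @ w @ z1" if w: "length w = m" for w
      using w z1 z2 z3 m l by (simp add: rotate_drop_take)
    have rot: "rotate (m + 2*s) ((x#y#r) @ z1 @ z2 @ z3) = z2 @ z3 @ x # y # r @ z1"
      using rotw[of "x#y#r"] r m by simp
    have tk: "take m (z2 @ z3 @ x # y # r @ z1) = z2" using z2 by simp
    have dr: "drop m (z2 @ z3 @ x # y # r @ z1) = z3 @ x # y # (r @ z1)" using z2 by simp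
    have o: "ompow g l (z3 @ x # y # (r @ z1)) = ompow g k z3 * omc g x y * ompow g (l-k-1) (r @ z1)"
      by (rule om_mid) (use z3 m l in simp_all)
    show ?thesis unfolding rot tm_def tk dr o by (simp add: mult_ac)
  qed
  show ?thesis unfolding Aj_def
    apply (subst lz)
    apply (subst sum_words_add)
    apply (subst sum_words_add)
    apply (simp only: sum_distrib_left)
    apply (intro sum.cong refl)
    apply (rule trm)
      apply (auto simp: words_def)
    done
qed

lemma killR:
  fixes u :: "nat \<Rightarrow> 'k::comm_ring_1 vec"
  assumes m: "m = a + 2*t + 2" and l: "l = s + t + 1" and r: "length r0 = m - 2"
  shows "Aj g m l u (m + 2*s) (r0 @ [x,y]) = (\<Sum>z1\<in>words g (2*s). \<Sum>z2\<in>words g (2*t+2).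
     vw (map u [1..<m+1]) (z2 @ take a r0) * ompow g t (drop a r0) * ompow g s z1 * ompow g l (z1@z2)) * omc g x y"
proof -
  define a1 where "a1 = take a r0"
  define a2 where "a2 = drop a r0"
  have rr: "r0 = a1 @ a2" by (simp add: a1_def a2_def)
  have l1: "length a1 = a" and l2: "length a2 = 2*t" using r m by (simp_all add: a1_def a2_def)
  have lz: "2*l = 2*s + (2*t+2)" using l by simp
  have trm: "tm m (vw (map u [1..<m+1])) (ompow g l) (rotate (m + 2*s) ((r0 @ [x,y]) @ z1 @ z2)) * ompow g l (z1 @ z2)
     = omc g x y * (vw (map u [1..<m+1]) (z2 @ a1) * ompow g t a2 * ompow g s z1 * ompow g l (z1@z2))"
    if z1: "length z1 = 2*s" and z2: "length z2 = 2*t+2" for z1 z2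
  proof -
    have rot: "rotate (m + 2*s) ((r0 @ [x,y]) @ z1 @ z2) = z2 @ a1 @ a2 @ x # y # z1"
      unfolding rr using l1 l2 z1 z2 m l by (simp add: rotate_drop_take)
    have tk: "take m (z2 @ a1 @ a2 @ x # y # z1) = z2 @ a1" using l1 z2 m by simp
    have dr: "drop m (z2 @ a1 @ a2 @ x # y # z1) = a2 @ x # y # z1" using l1 z2 m by simp
    have o: "ompow g l (a2 @ x # y # z1) = ompow g t a2 * omc g x y * ompow g s z1"
    proof -
      have "ompow g l (a2 @ x # y # z1) = ompow g t a2 * omc g x y * ompow g (l - t - 1) z1"
        by (rule om_mid) (use l2 l in simp_all)
      moreover have "l - t - 1 = s" using l by simp
      ultimately show ?thesis by simp
    qed
    show ?thesis unfolding rot tm_def tk dr o by (simp add: mult_ac)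
  qed
  show ?thesis unfolding Aj_def
    apply (subst lz)
    apply (subst sum_words_add)
    apply (simp only: sum_distrib_right)
    apply (intro sum.cong refl)
    apply (subst mult.commute[of _ "omc g x y"])
    apply (rule trm[unfolded a1_def a2_def])
     apply (auto simp: words_def)
    done
qed

definition T1 :: "nat \<Rightarrow> nat \<Rightarrow> (nat \<Rightarrow> 'k::comm_ring_1 vec) \<Rightarrow> nat \<Rightarrow> 'k tensor" where
  "T1 g m u k v = contl g (map u [m-k+1..<m]) *
        tm 1 (vt (u m)) (tm (k - 1) (ompow g ((k - 1) div 2)) (vw (map u [1..<m-k+1]))) v"

definition T2 :: "nat \<Rightarrow> nat \<Rightarrow> (nat \<Rightarrow> 'k::comm_ring_1 vec) \<Rightarrow> nat \<Rightarrow> 'k tensor" where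
  "T2 g m u k v = contl g (map u [2..<k+1]) *
        tm (m - k) (vw (map u [k+1..<m+1])) (tm (k - 1) (ompow g ((k - 1) div 2)) (vt (u 1))) v"

definition Kset :: "nat \<Rightarrow> nat set" where "Kset m = {k. 1 \<le> k \<and> k \<le> m - 1 \<and> odd k}"

lemma Phi2_T: "Phi2 g m u v = (\<Sum>k\<in>Kset m. (-1)^((k-1) div 2) * T1 g m u k v) + (\<Sum>k\<in>Kset m. (-1)^((k-1) div 2) * T2 g m u k v)"
  unfolding Phi2_def T1_def T2_def Kset_def by (simp add: distrib_left sum.distrib)

definition Bj :: "nat \<Rightarrow> nat \<Rightarrow> nat \<Rightarrow> (nat \<Rightarrow> 'k::comm_ring_1 vec) \<Rightarrow> nat \<Rightarrow> 'k tensor" where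
  "Bj g m l u j v =
     (if j = 0 then of_nat (2*g) ^ l * vw (map u [1..<m+1]) v else 0)
   + (if odd j \<and> j < m then (-1)^l * ((-1)^((j-1) div 2) * T1 g m u j v) else 0)
   + (if odd j \<and> m < j \<and> j \<le> 2*l then (-1)^l * Phi1 g m u v else 0)
   + (if odd j \<and> 2*l < j then (-1)^l * ((-1)^((m+2*l-j-1) div 2) * T2 g m u (m+2*l-j) v) else 0)"

lemma finite_Kset[simp]: "finite (Kset m)" unfolding Kset_def by (rule finite_subset[of _ "{..m}"]) auto

lemma sumB:
  assumes m: "m = 2*h" "1 \<le> h" and hl: "h \<le> l"
  shows "(\<Sum>j<m+2*l. Bj g m l u j v) = of_nat (2*g) ^ l * vw (map u [1..<m+1]) v
               + of_nat (l - m div 2) * (-1) ^ l * Phi1 g m u v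
               + (-1) ^ l * Phi2 g m u v"
proof -
  let ?N = "m+2*l"
  have s0: "(\<Sum>j<?N. (if j = 0 then of_nat (2*g) ^ l * vw (map u [1..<m+1]) v else 0)) = of_nat (2*g) ^ l * vw (map u [1..<m+1]) v"
    using m by (simp add: sum.delta)
  have e1: "{j \<in> {..<?N}. odd j \<and> j < m} = Kset m" unfolding Kset_def using m by (auto dest: odd_pos)
  have s1: "(\<Sum>j<?N. (if odd j \<and> j < m then (-1)^l * ((-1)^((j-1) div 2) * T1 g m u j v) else 0))
     = (-1)^l * (\<Sum>k\<in>Kset m. (-1)^((k-1) div 2) * T1 g m u k v)"
    unfolding sum.inter_filter[OF finite_lessThan, symmetric] e1 by (simp add: sum_distrib_left)
  have e2: "{j \<in> {..<?N}. odd j \<and> m < j \<and> j \<le> 2*l} = (\<lambda>i. m + 1 + 2*i) ` {..<l-h}"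
  proof (rule set_eqI, rule iffI)
    fix j assume j: "j \<in> {j \<in> {..<?N}. odd j \<and> m < j \<and> j \<le> 2*l}"
    then obtain i where "j = 2*i+1" by (auto elim: oddE)
    then show "j \<in> (\<lambda>i. m + 1 + 2*i) ` {..<l-h}" using j m
      by (auto intro!: image_eqI[where x="i - h"])
  qed (use m in auto)
  have c2: "card {j \<in> {..<?N}. odd j \<and> m < j \<and> j \<le> 2*l} = l - m div 2"
    unfolding e2 using m by (subst card_image) (auto simp: inj_on_def)
  have s2: "(\<Sum>j<?N. (if odd j \<and> m < j \<and> j \<le> 2*l then (-1)^l * Phi1 g m u v else 0))
     = of_nat (l - m div 2) * (-1) ^ l * Phi1 g m u v"
    unfolding sum.inter_filter[OF finite_lessThan, symmetric] sum_constant c2 by simp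
  have s3: "(\<Sum>j<?N. (if odd j \<and> 2*l < j then (-1)^l * ((-1)^((?N-j-1) div 2) * T2 g m u (?N-j) v) else 0))
     = (-1)^l * (\<Sum>k\<in>Kset m. (-1)^((k-1) div 2) * T2 g m u k v)"
  proof -
    have "(\<Sum>j\<in>{j \<in> {..<?N}. odd j \<and> 2*l < j}. (-1)^((?N-j-1) div 2) * T2 g m u (?N-j) v)
        = (\<Sum>k\<in>Kset m. (-1)^((k-1) div 2) * T2 g m u k v)"
      by (rule sum.reindex_bij_witness[where i="\<lambda>k. ?N - k" and j="\<lambda>j. ?N - j"])
         (use m in \<open>auto simp: Kset_def\<close>)
    then show ?thesis unfolding sum.inter_filter[OF finite_lessThan, symmetric] by (simp only: sum_distrib_left[symmetric])
  qed
  show ?thesis unfolding Bj_def sum.distrib s0 s1 s2 s3 Phi2_T by (simp add: algebra_simps)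
qed

lemma neg1_cong: "even (a + b) \<Longrightarrow> (-1::'k::comm_ring_1)^a = (-1)^b"
  by (auto simp: minus_one_power_iff)

lemma Pi2_zero: "Pi2 g (\<lambda>v. 0::'k::field) w = 0"
  by (simp add: Pi2_def piL_def piR_def)

lemma words_len: "v \<in> words g m \<Longrightarrow> length v = m" by (simp add: words_def)
lemma words_nth: "v \<in> words g m \<Longrightarrow> i < m \<Longrightarrow> v ! i < 2*g"
  by (auto simp: words_def dest!: nth_mem)

lemma perj_b:
  fixes u :: "nat \<Rightarrow> 'k::field_char_0 vec"
  assumes m: "m = 2*h" "2 \<le> h" and hl: "h \<le> l" and j: "j = 2*i+1" "j < m" and v: "v \<in> words g m"
  shows "Aj g m l u j v = Bj g m l u j v"
proof -
  have lv: "length v = m" using v by (rule words_len)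
  define v0 where "v0 = hd v"
  define v1 where "v1 = take (2*i) (tl v)"
  define v2 where "v2 = drop (2*i) (tl v)"
  have vv: "v = v0 # v1 @ v2" using lv m unfolding v0_def v1_def v2_def by (cases v) auto
  have l1: "length v1 = 2*i" and l2: "length v2 = m - j" using lv j m unfolding v1_def v2_def by auto
  have v0: "v0 < 2*g" using words_nth[OF v, of 0] m vv by simp
  have A: "Aj g m l u j v = (-1)^(Suc (l-i-1)) * contl g (map u [(m-j)+1..<m]) * u m v0 * ompow g i v1 * vw (map u [1..<(m-j)+1]) v2"
    unfolding j(1) by (rule case3[OF _ _ vv l1 _ v0]) (use j m hl l2 in simp_all)
  have B: "Bj g m l u j v = (-1)^l * ((-1)^i * (contl g (map u [m-j+1..<m]) * (u m v0 * (ompow g i v1 * vw (map u [1..<m-j+1]) v2))))"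
    unfolding Bj_def T1_def using j m hl l1 l2 by (simp add: vv tm_def)
  have s: "(-1::'k)^(Suc (l-i-1)) = (-1)^l * (-1)^i"
  proof -
    have eq: "Suc (l-i-1) + (l + i) = 2*l" using j m hl by linarith
    show ?thesis unfolding power_add[symmetric] by (rule neg1_cong, subst eq, simp)
  qed
  show ?thesis unfolding A B s by (simp add: mult_ac)
qed

lemma perj_c:
  fixes u :: "nat \<Rightarrow> 'k::field_char_0 vec"
  assumes m: "m = 2*h" "2 \<le> h" and hl: "h \<le> l" and j: "j = m + 2*s + 1" "j \<le> 2*l" and v: "v \<in> words g m"
  shows "Aj g m l u j v = Bj g m l u j v"
proof -
  have lv: "length v = m" using v by (rule words_len)
  define v0 where "v0 = hd v"
  define v1 where "v1 = tl (butlast v)"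
  define v2 where "v2 = last v"
  have vv0: "v = hd v # tl (butlast v) @ [last v]"
  proof (cases v rule: rev_cases)
    case Nil then show ?thesis using lv m by simp
  next
    case (snoc ys y)
    then obtain a zs where "ys = a # zs" using lv m by (cases ys) auto
    then show ?thesis using snoc by simp
  qed
  have vv: "v = v0 # v1 @ [v2]" unfolding v0_def v1_def v2_def by (rule vv0)
  have l1: "length v1 = 2*(h-1)" using lv m unfolding v1_def by auto
  have v0: "v0 < 2*g" using words_nth[OF v, of 0] m vv by simp
  have v2: "v2 < 2*g" using words_nth[OF v, of "m-1"] m lv unfolding v2_def by (subst last_conv_nth) auto
  have A: "Aj g m l u j v = (-1)^(Suc (l-s-h-1)) * (-1)^(Suc s) * contl g (map u [2..<m]) * u m v0 * ompow g (h-1) v1 * u 1 v2"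
    unfolding j(1) by (rule case5a[OF _ _ vv l1 v0 v2]) (use j m hl in simp_all)
  have B: "Bj g m l u j v = (-1)^l * ((-1) ^ (h - 1) * contl g (map u [2..<m]) * (u m v0 * (ompow g (h-1) v1 * u 1 v2)))"
    unfolding Bj_def Phi1_def using j m hl l1 by (simp add: vv tm_def)
  have s: "(-1::'k)^(Suc (l-s-h-1)) * (-1)^(Suc s) = (-1)^l * (-1)^(h-1)"
  proof -
    define n where "n = l-s-h-1"
    have ln: "l = n + s + h + 1" using j m hl unfolding n_def by linarith
    have eq: "Suc (l-s-h-1) + Suc s + (l + (h-1)) = 2*(n+s+h+1)" using ln m unfolding n_def by arith
    show ?thesis unfolding power_add[symmetric] by (rule neg1_cong, subst eq, simp)
  qed
  show ?thesis unfolding A B s by (simp add: mult_ac)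
qed

lemma perj_d:
  fixes u :: "nat \<Rightarrow> 'k::field_char_0 vec"
  assumes m: "m = 2*h" "2 \<le> h" and hl: "h \<le> l" and j: "j = m + 2*s + 1" "2*l < j" "j < m + 2*l"
    and v: "v \<in> words g m"
  shows "Aj g m l u j v = Bj g m l u j v"
proof -
  have lv: "length v = m" using v by (rule words_len)
  define i where "i = l - s - 1"
  have ji: "m + 2*l - j = 2*i+1" "l = s + i + 1" "2*i+1 < m" using j m unfolding i_def by auto
  define q where "q = m - (2*i+1)"
  define v1 where "v1 = take q v"
  define v2 where "v2 = butlast (drop q v)"
  define v3 where "v3 = last v"
  have vv: "v = v1 @ v2 @ [v3]"
  proof -
    have ne: "drop q v \<noteq> []" using lv ji unfolding q_def by simp
    have "last (drop q v) = last v" using lv ji unfolding q_def by simp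
    then have "drop q v = v2 @ [v3]" unfolding v2_def v3_def using ne by (metis append_butlast_last_id)
    then show ?thesis unfolding v1_def by (metis append_take_drop_id)
  qed
  have l1: "length v1 = q" and l2: "length v2 = 2*i" using lv ji unfolding v1_def v2_def q_def by auto
  have v3: "v3 < 2*g" using words_nth[OF v, of "m-1"] m lv unfolding v3_def by (subst last_conv_nth) auto
  have A: "Aj g m l u j v = (-1)^(Suc s) * contl g (map u [2..<2*i+2]) * vw (map u [2*i+2..<m+1]) v1 * ompow g i v2 * u 1 v3"
    unfolding j(1) by (rule case5b[OF _ ji(2) vv l1 l2 v3]) (use ji in \<open>simp add: q_def\<close>)
  have B: "Bj g m l u j v = (-1)^l * ((-1) ^ i * (contl g (map u [2..<2*i+2]) * (vw (map u [2*i+2..<m+1]) v1 * (ompow g i v2 * u 1 v3))))"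
    unfolding Bj_def T2_def ji(1) using j m hl l1 l2 ji by (simp add: vv tm_def q_def)
  have s: "(-1::'k)^(Suc s) = (-1)^l * (-1)^i"
  proof -
    have eq: "Suc s + (l + i) = 2*(s+i+1)" using ji by arith
    show ?thesis unfolding power_add[symmetric] by (rule neg1_cong, subst eq, simp)
  qed
  show ?thesis unfolding A B s by (simp add: mult_ac)
qed

lemma perj_e:
  fixes u :: "nat \<Rightarrow> 'k::field_char_0 vec"
  assumes m: "m = 2*h" "2 \<le> h" and hl: "h \<le> l" and g: "0 < g" and j: "j = 2*i+2" "j < m" and w: "w \<in> words g m"
  shows "Pi2 g (Aj g m l u j) w = 0"
proof -
  have "i + 1 < h" using m j by linarith
  then have f: "2*i+4 \<le> m" "m \<le> 2*l" "4 \<le> m" "length w = m" using m hl j words_len[OF w] by linarith+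
  show ?thesis unfolding j(1) by (rule L_kill, rule killL1) (simp_all add: f g)
qed

lemma perj_f:
  fixes u :: "nat \<Rightarrow> 'k::field_char_0 vec"
  assumes m: "m = 2*h" "2 \<le> h" and hl: "h \<le> l" and g: "0 < g" and j: "j = m + 2*s" "j \<le> 2*l" and w: "w \<in> words g m"
  shows "Pi2 g (Aj g m l u j) w = 0"
proof -
  have f: "m = 2*h" "1 \<le> h" "l = s + h + (l-s-h)" "4 \<le> m" "length w = m" using m hl j words_len[OF w] by linarith+
  show ?thesis unfolding j(1) by (rule L_kill, rule killL2[where h=h and k="l-s-h"]) (use f g in blast)+
qed

lemma perj_g:
  fixes u :: "nat \<Rightarrow> 'k::field_char_0 vec"
  assumes m: "m = 2*h" "2 \<le> h" and hl: "h \<le> l" and g: "0 < g" and j: "j = m + 2*s" "2*l < j" "j < m + 2*l"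
    and w: "w \<in> words g m"
  shows "Pi2 g (Aj g m l u j) w = 0"
proof -
  have f: "m = (m - 2*(l-s-1) - 2) + 2*(l-s-1) + 2" "l = s + (l-s-1) + 1" "2 \<le> m" "length w = m"
    using m hl j words_len[OF w] by linarith+
  show ?thesis unfolding j(1) by (rule R_kill, rule killR[where a="m - 2*(l-s-1) - 2" and t="l-s-1"]) (use f g in blast)+
qed

lemma Bj_zero: "even j \<Longrightarrow> j \<noteq> 0 \<Longrightarrow> Bj g m l u j = (\<lambda>v. 0)"
  by (rule ext) (simp add: Bj_def)

lemma perj:
  fixes u :: "nat \<Rightarrow> 'k::field_char_0 vec"
  assumes m: "m = 2*h" "2 \<le> h" and hl: "h \<le> l" and g: "0 < g" and j: "j < m + 2*l" and w: "w \<in> words g m"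
  shows "Pi2 g (Aj g m l u j) w = Pi2 g (Bj g m l u j) w"
proof -
  have m2: "2 \<le> m" using m by simp
  consider (a) "j = 0" | (b) "odd j" "j < m" | (c) "odd j" "m < j" "j \<le> 2*l" | (d) "odd j" "2*l < j"
    | (e) "even j" "0 < j" "j < m" | (f) "even j" "m \<le> j" "j \<le> 2*l" | (g) "even j" "2*l < j"
  proof -
    have "j = 0 \<or> (odd j \<and> j < m) \<or> (odd j \<and> m < j \<and> j \<le> 2*l) \<or> (odd j \<and> 2*l < j)
      \<or> (even j \<and> 0 < j \<and> j < m) \<or> (even j \<and> m \<le> j \<and> j \<le> 2*l) \<or> (even j \<and> 2*l < j)"
    proof -
      have jm: "odd j \<Longrightarrow> j \<noteq> m" using m by auto
      show ?thesis using jm by (cases "even j"; cases "j = 0"; cases "j < m"; cases "j \<le> 2*l"; auto)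
    qed
    then show ?thesis using that by blast
  qed
  then show ?thesis
  proof cases
    case a
    show ?thesis
      by (rule Pi2_cong[OF _ w m2]) (simp add: a Bj_def case0 words_len)
  next
    case b
    then obtain i where "j = 2*i+1" by (auto elim: oddE)
    show ?thesis
      by (rule Pi2_cong[OF _ w m2], rule perj_b[OF m hl \<open>j = 2*i+1\<close> b(2)])
  next
    case c
    obtain q where q: "j = 2*q+1" using c by (auto elim: oddE)
    have "h \<le> q" using c m q by linarith
    define s where "s = q - h"
    have "j = m + 2*s + 1" using q m \<open>h \<le> q\<close> unfolding s_def by linarith
    show ?thesis
      by (rule Pi2_cong[OF _ w m2], rule perj_c[OF m hl \<open>j = m + 2*s + 1\<close> c(3)])
  next
    case d
    obtain q where q: "j = 2*q+1" using d by (auto elim: oddE)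
    have "h \<le> q" using d m hl q by linarith
    define s where "s = q - h"
    have "j = m + 2*s + 1" using q m \<open>h \<le> q\<close> unfolding s_def by linarith
    show ?thesis
      by (rule Pi2_cong[OF _ w m2], rule perj_d[OF m hl \<open>j = m + 2*s + 1\<close> d(2) j])
  next
    case e
    obtain q where q: "j = 2*q" using e by (auto elim: evenE)
    define i where "i = q - 1"
    have "j = 2*i+2" using e q unfolding i_def by linarith
    have bz: "Bj g m l u j = (\<lambda>v. 0)" by (rule Bj_zero) (use e in auto)
    show ?thesis unfolding bz Pi2_zero by (rule perj_e[OF m hl g \<open>j = 2*i+2\<close> e(3) w])
  next
    case f
    obtain q where q: "j = 2*q" using f by (auto elim: evenE)
    define s where "s = q - h"
    have "j = m + 2*s" using f m q unfolding s_def by linarith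
    have bz: "Bj g m l u j = (\<lambda>v. 0)" by (rule Bj_zero) (use f m in auto)
    show ?thesis unfolding bz Pi2_zero by (rule perj_f[OF m hl g \<open>j = m + 2*s\<close> f(3) w])
  next
    case gg: g
    obtain q where q: "j = 2*q" using gg by (auto elim: evenE)
    define s where "s = q - h"
    have "j = m + 2*s" using gg m hl q unfolding s_def by linarith
    have bz: "Bj g m l u j = (\<lambda>v. 0)" by (rule Bj_zero) (use gg m hl in auto)
    show ?thesis unfolding bz Pi2_zero by (rule perj_g[OF m hl g \<open>j = m + 2*s\<close> gg(2) j w])
  qed
qed

lemma inner:
  fixes u :: "nat \<Rightarrow> 'k::field_char_0 vec"
  assumes lv: "length v = m" and m: "0 < m"
  shows "contrC g l (cyc (m + 2*l) (tm m (vw (map u [1..<m+1])) (ompow g l))) v = (\<Sum>j<m+2*l. Aj g m l u j v)"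
proof -
  have "contrC g l (cyc (m + 2*l) (tm m (vw (map u [1..<m+1])) (ompow g l))) v
     = (\<Sum>z\<in>words g (2*l). (\<Sum>j<m+2*l. tm m (vw (map u [1..<m+1])) (ompow g l) (rotate j (v@z))) * ompow g l z)"
    unfolding contrC_def ompow_def[symmetric]
    by (intro sum.cong refl) (use lv m in \<open>simp add: cyc_rot words_def\<close>)
  also have "\<dots> = (\<Sum>j<m+2*l. Aj g m l u j v)"
    unfolding Aj_def sum_distrib_right by (rule sum.swap)
  finally show ?thesis .
qed

theorem lemma5p4:
  fixes g m l :: nat and u :: "nat \<Rightarrow> 'k::field_char_0 vec"
  assumes "0 < g" and "even m" and "4 \<le> m" and "m div 2 \<le> l"
  shows "\<forall>w\<in>words g m.
    Pi2 g (contrC g l (cyc (m + 2*l) (tm m (vw (map u [1..<m+1])) (ompow g l)))) w =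
    Pi2 g (\<lambda>v. of_nat (2*g) ^ l * vw (map u [1..<m+1]) v
               + of_nat (l - m div 2) * (-1) ^ l * Phi1 g m u v
               + (-1) ^ l * Phi2 g m u v) w"
proof
  fix w assume w: "w \<in> words g m"
  obtain h where m: "m = 2*h" using assms(2) by (auto elim: evenE)
  have h2: "2 \<le> h" and hl: "h \<le> l" using assms m by auto
  have m2: "2 \<le> m" using assms by simp
  have "Pi2 g (contrC g l (cyc (m + 2*l) (tm m (vw (map u [1..<m+1])) (ompow g l)))) w
      = Pi2 g (\<lambda>v. \<Sum>j<m+2*l. Aj g m l u j v) w"
    apply (rule Pi2_cong[OF _ w m2])
    apply (rule inner)
    apply (erule words_len)
    using m2 by simp
  also have "\<dots> = (\<Sum>j<m+2*l. Pi2 g (Aj g m l u j) w)" by (rule Pi2_sum) simp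
  also have "\<dots> = (\<Sum>j<m+2*l. Pi2 g (Bj g m l u j) w)"
    by (intro sum.cong refl perj[OF m h2 hl assms(1) _ w]) simp
  also have "\<dots> = Pi2 g (\<lambda>v. \<Sum>j<m+2*l. Bj g m l u j v) w" by (rule Pi2_sum[symmetric]) simp
  also have "(\<lambda>v. \<Sum>j<m+2*l. Bj g m l u j v) = (\<lambda>v. of_nat (2*g) ^ l * vw (map u [1..<m+1]) v
               + of_nat (l - m div 2) * (-1) ^ l * Phi1 g m u v
               + (-1) ^ l * Phi2 g m u v)"
    apply (rule ext)
    apply (rule sumB[OF m _ hl])
    using h2 by simp
  finally show "Pi2 g (contrC g l (cyc (m + 2*l) (tm m (vw (map u [1..<m+1])) (ompow g l)))) w =
    Pi2 g (\<lambda>v. of_nat (2*g) ^ l * vw (map u [1..<m+1]) v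
               + of_nat (l - m div 2) * (-1) ^ l * Phi1 g m u v
               + (-1) ^ l * Phi2 g m u v) w" .
qed

end
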